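(* Let $K_f, M, B, P_m, P_f, k_{22}>0$, $B_f>0$, $I_m, I_f\ge 0$, $b_{22}\ge 0$ and $0\le\alpha\le 1$ be real numbers, and put $\mu=I_m/P_m$, $\nu=I_f/P_f$. Consider the two-port with hybrid matrix $H(s)=\begin{bmatrix} h_{11}&h_{12}\\ h_{21}&h_{22}\end{bmatrix}$ where $$h_{11}(s)=\frac{B_fMs^4+\big(B_f(B+P_m)+K_fM\big)s^3+\big(B_fI_m+K_f(B+P_m)\big)s^2+K_fI_ms}{a_4s^4+a_3s^3+a_2s^2+a_1s+a_0},$$ $$h_{12}(s)=\frac{B_fP_mP_fs^3+P_mP_f\big(K_f+B_f(\mu+\nu)\big)s^2+\big(B_fI_mI_f+K_fP_mP_f(\mu+\nu)\big)s+K_fI_mI_f}{a_4s^4+a_3s^3+a_2s^2+a_1s+a_0},$$ $h_{21}(s)=-1$, $h_{22}(s)=\dfrac{s}{b_{22}s+k_{22}}$, with $a_4=M$, $a_3=B+P_m+B_f(\alpha+P_mP_f)$, $a_2=I_m+K_f(\alpha+P_mP_f)+B_fP_mP_f(\mu+\nu)$, $a_1=B_fI_mI_f+K_fP_mP_f(\mu+\nu)$, $a_0=K_fI_mI_f$. Suppose that: the $h$-parameters have no poles in the open right half plane; any poles of the $h$-parameters on the imaginary axis are simple with real positive residues; and $\mathrm{Re}\,h_{11}(j\omega)\ge 0$ for all real $\omega$. If this two-port is absolutely stable, then $b_{22}>0$.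
   Context: This models a series damped elastic actuator (actuator inertia $M$, actuator damping $B$, physical spring $K_f$ in parallel with physical damper $B_f$) under velocity-sourced impedance control with PI motion controller gains $P_m,I_m$, PI force controller gains $P_f,I_f$, feed-forward parameter $\alpha$, and a virtual coupler consisting of a spring $k_{22}$ in parallel with a damper $b_{22}$. The hybrid matrix relates $(F_{\mathrm{int}},v_e)^T=H\,(-v_h,F_e)^T$. A two-port with hybrid matrix $H$ is called absolutely stable if (Llewellyn's criterion): (a) the $h$-parameters have no poles in the open right half plane; (b) any poles of the $h$-parameters on the imaginary axis are simple with real positive residues; (c) for all real $\omega$ (away from imaginary-axis poles), (i) $\mathrm{Re}\,h_{11}(j\omega)\ge 0$ and (ii) $2\,\mathrm{Re}\,h_{11}(j\omega)\,\mathrm{Re}\,h_{22}(j\omega)-\mathrm{Re}\big(h_{12}(j\omega)h_{21}(j\omega)\big)-\big|h_{12}(j\omega)h_{21}(j\omega)\big|\ge 0$. *)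

theory Defs
  imports "HOL-Complex_Analysis.Complex_Analysis"
begin

definition llewellyn_a ::
  "(complex \<Rightarrow> complex) \<Rightarrow> (complex \<Rightarrow> complex) \<Rightarrow> (complex \<Rightarrow> complex) \<Rightarrow> (complex \<Rightarrow> complex) \<Rightarrow> bool" where
  "llewellyn_a h11 h12 h21 h22 \<longleftrightarrow>
     (\<forall>h\<in>{h11, h12, h21, h22}. \<forall>z. Re z > 0 \<longrightarrow> \<not> is_pole h z)"

definition llewellyn_b ::
  "(complex \<Rightarrow> complex) \<Rightarrow> (complex \<Rightarrow> complex) \<Rightarrow> (complex \<Rightarrow> complex) \<Rightarrow> (complex \<Rightarrow> complex) \<Rightarrow> bool" where
  "llewellyn_b h11 h12 h21 h22 \<longleftrightarrow>
     (\<forall>h\<in>{h11, h12, h21, h22}. \<forall>w::real. is_pole h (\<i> * of_real w) \<longrightarrow>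
        zorder h (\<i> * of_real w) = -1 \<and>
        residue h (\<i> * of_real w) \<in> \<real> \<and> Re (residue h (\<i> * of_real w)) > 0)"

text \<open>Real frequencies "away from imaginary-axis poles": those at which every
  h-parameter (as a HOL function) is continuous.  This excludes the poles, and also
  the (finitely many) removable singularities, where HOL's convention x/0 = 0 would
  give a wrong value; by continuity nothing is lost there.\<close>
definition regular_freq ::
  "(complex \<Rightarrow> complex) \<Rightarrow> (complex \<Rightarrow> complex) \<Rightarrow> (complex \<Rightarrow> complex) \<Rightarrow> (complex \<Rightarrow> complex) \<Rightarrow> real \<Rightarrow> bool" where
  "regular_freq h11 h12 h21 h22 \<omega> \<longleftrightarrow>
     (\<forall>h\<in>{h11, h12, h21, h22}. isCont h (\<i> * of_real \<omega>))"

definition llewellyn_ci ::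
  "(complex \<Rightarrow> complex) \<Rightarrow> (complex \<Rightarrow> complex) \<Rightarrow> (complex \<Rightarrow> complex) \<Rightarrow> (complex \<Rightarrow> complex) \<Rightarrow> bool" where
  "llewellyn_ci h11 h12 h21 h22 \<longleftrightarrow>
     (\<forall>\<omega>::real. regular_freq h11 h12 h21 h22 \<omega> \<longrightarrow> Re (h11 (\<i> * of_real \<omega>)) \<ge> 0)"

definition llewellyn_cii ::
  "(complex \<Rightarrow> complex) \<Rightarrow> (complex \<Rightarrow> complex) \<Rightarrow> (complex \<Rightarrow> complex) \<Rightarrow> (complex \<Rightarrow> complex) \<Rightarrow> bool" where
  "llewellyn_cii h11 h12 h21 h22 \<longleftrightarrow>
     (\<forall>\<omega>::real. regular_freq h11 h12 h21 h22 \<omega> \<longrightarrow>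
        (let s = \<i> * of_real \<omega> in
          2 * Re (h11 s) * Re (h22 s) - Re (h12 s * h21 s) - cmod (h12 s * h21 s) \<ge> 0))"

definition absolutely_stable ::
  "(complex \<Rightarrow> complex) \<Rightarrow> (complex \<Rightarrow> complex) \<Rightarrow> (complex \<Rightarrow> complex) \<Rightarrow> (complex \<Rightarrow> complex) \<Rightarrow> bool" where
  "absolutely_stable h11 h12 h21 h22 \<longleftrightarrow>
     llewellyn_a h11 h12 h21 h22 \<and> llewellyn_b h11 h12 h21 h22 \<and>
     llewellyn_ci h11 h12 h21 h22 \<and> llewellyn_cii h11 h12 h21 h22"

definition sdea_den ::
  "real \<Rightarrow> real \<Rightarrow> real \<Rightarrow> real \<Rightarrow> real \<Rightarrow> real \<Rightarrow> real \<Rightarrow> real \<Rightarrow> real \<Rightarrow> complex \<Rightarrow> complex" where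
  "sdea_den Kf Bf M B Pm Imc Pf Ifc \<alpha> s =
     (let \<mu> = Imc / Pm; \<nu> = Ifc / Pf;
          a4 = M;
          a3 = B + Pm + Bf * (\<alpha> + Pm * Pf);
          a2 = Imc + Kf * (\<alpha> + Pm * Pf) + Bf * Pm * Pf * (\<mu> + \<nu>);
          a1 = Bf * Imc * Ifc + Kf * Pm * Pf * (\<mu> + \<nu>);
          a0 = Kf * Imc * Ifc
      in of_real a4 * s^4 + of_real a3 * s^3 + of_real a2 * s^2 + of_real a1 * s + of_real a0)"

definition sdea_h11 ::
  "real \<Rightarrow> real \<Rightarrow> real \<Rightarrow> real \<Rightarrow> real \<Rightarrow> real \<Rightarrow> real \<Rightarrow> real \<Rightarrow> real \<Rightarrow> complex \<Rightarrow> complex" where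
  "sdea_h11 Kf Bf M B Pm Imc Pf Ifc \<alpha> s =
     (of_real (Bf * M) * s^4 + of_real (Bf * (B + Pm) + Kf * M) * s^3
      + of_real (Bf * Imc + Kf * (B + Pm)) * s^2 + of_real (Kf * Imc) * s)
     / sdea_den Kf Bf M B Pm Imc Pf Ifc \<alpha> s"

definition sdea_h12 ::
  "real \<Rightarrow> real \<Rightarrow> real \<Rightarrow> real \<Rightarrow> real \<Rightarrow> real \<Rightarrow> real \<Rightarrow> real \<Rightarrow> real \<Rightarrow> complex \<Rightarrow> complex" where
  "sdea_h12 Kf Bf M B Pm Imc Pf Ifc \<alpha> s =
     (let \<mu> = Imc / Pm; \<nu> = Ifc / Pf in
      (of_real (Bf * Pm * Pf) * s^3 + of_real (Pm * Pf * (Kf + Bf * (\<mu> + \<nu>))) * s^2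
       + of_real (Bf * Imc * Ifc + Kf * Pm * Pf * (\<mu> + \<nu>)) * s + of_real (Kf * Imc * Ifc))
      / sdea_den Kf Bf M B Pm Imc Pf Ifc \<alpha> s)"

definition sdea_h21 :: "complex \<Rightarrow> complex" where
  "sdea_h21 s = -1"

definition sdea_h22 :: "real \<Rightarrow> real \<Rightarrow> complex \<Rightarrow> complex" where
  "sdea_h22 b22 k22 s = s / (of_real b22 * s + of_real k22)"

end

theory Submission
  imports Defs
begin

lemma odd_poly_neg:
  fixes c7 c5 c3 c1 :: real
  assumes "c7 < 0"
  shows "\<exists>x::real. c7*x^7 + c5*x^5 + c3*x^3 + c1*x < 0"
proof -
  define S where "S = \<bar>c5\<bar> + \<bar>c3\<bar> + \<bar>c1\<bar>"
  define x where "x = 1 + S / (-c7)"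
  have S0: "S \<ge> 0" unfolding S_def by simp
  have x1: "x \<ge> 1" unfolding x_def using S0 assms by (simp add: divide_nonneg_neg)
  have x53: "x^3 \<le> x^5" using x1 by (intro power_increasing) auto
  have x51: "x \<le> x^5" using x1 power_increasing[of 1 5 x] by simp
  have "c5*x^5 \<le> \<bar>c5\<bar>*x^5" using x1 by (intro mult_right_mono) auto
  moreover have "c3*x^3 \<le> \<bar>c3\<bar>*x^5"
    using x1 x53 by (meson abs_ge_self abs_ge_zero mult_mono order.trans zero_le_one zero_le_power)
  moreover have "c1*x \<le> \<bar>c1\<bar>*x^5"
    using x1 x51 by (meson abs_ge_self abs_ge_zero mult_mono order.trans zero_le_one)
  ultimately have A: "c5*x^5 + c3*x^3 + c1*x \<le> S * x^5" unfolding S_def by (simp add: algebra_simps)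
  have "-c7 * x = -c7 + S" unfolding x_def using assms by (simp add: field_simps)
  hence "-c7 * x > S" using assms by simp
  moreover have "-c7 * x^2 \<ge> -c7 * x" using x1 assms
    by (intro mult_left_mono) (auto simp: power2_eq_square)
  ultimately have "-c7 * x^2 > S" by simp
  hence "(-c7 * x^2) * x^5 > S * x^5" using x1 by (intro mult_strict_right_mono) auto
  hence "c7 * x^7 + S * x^5 < 0" by (simp add: algebra_simps power_add[symmetric])
  with A show ?thesis by (intro exI[of _ x]) linarith
qed

theorem lemma6:
  fixes Kf M B Pm Pf k22 Bf Imc Ifc b22 \<alpha> :: real
  assumes "Kf > 0" and "M > 0" and "B > 0" and "Pm > 0" and "Pf > 0" and "k22 > 0"
    and "Bf > 0" and "Imc \<ge> 0" and "Ifc \<ge> 0" and "b22 \<ge> 0"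
    and "0 \<le> \<alpha>" and "\<alpha> \<le> 1"
    and "llewellyn_a (sdea_h11 Kf Bf M B Pm Imc Pf Ifc \<alpha>) (sdea_h12 Kf Bf M B Pm Imc Pf Ifc \<alpha>)
           sdea_h21 (sdea_h22 b22 k22)"
    and "llewellyn_b (sdea_h11 Kf Bf M B Pm Imc Pf Ifc \<alpha>) (sdea_h12 Kf Bf M B Pm Imc Pf Ifc \<alpha>)
           sdea_h21 (sdea_h22 b22 k22)"
    and "llewellyn_ci (sdea_h11 Kf Bf M B Pm Imc Pf Ifc \<alpha>) (sdea_h12 Kf Bf M B Pm Imc Pf Ifc \<alpha>)
           sdea_h21 (sdea_h22 b22 k22)"
    and "absolutely_stable (sdea_h11 Kf Bf M B Pm Imc Pf Ifc \<alpha>) (sdea_h12 Kf Bf M B Pm Imc Pf Ifc \<alpha>)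
           sdea_h21 (sdea_h22 b22 k22)"
  shows "b22 > 0"
proof (rule ccontr)
  assume "\<not> b22 > 0"
  hence b0: "b22 = 0" using assms(10) by simp
  define \<mu> where "\<mu> = Imc / Pm"
  define \<nu> where "\<nu> = Ifc / Pf"
  define n3 where "n3 = Bf * Pm * Pf"
  define n2 where "n2 = Pm * Pf * (Kf + Bf * (\<mu> + \<nu>))"
  define n1 where "n1 = Bf * Imc * Ifc + Kf * Pm * Pf * (\<mu> + \<nu>)"
  define n0 where "n0 = Kf * Imc * Ifc"
  define a4 where "a4 = M"
  define a3 where "a3 = B + Pm + Bf * (\<alpha> + Pm * Pf)"
  define a2 where "a2 = Imc + Kf * (\<alpha> + Pm * Pf) + Bf * Pm * Pf * (\<mu> + \<nu>)"
  define a1 where "a1 = Bf * Imc * Ifc + Kf * Pm * Pf * (\<mu> + \<nu>)"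
  define a0 where "a0 = Kf * Imc * Ifc"
  define N where "N = (\<lambda>s::complex. of_real n3 * s^3 + of_real n2 * s^2 + of_real n1 * s + of_real n0)"
  define D where "D = (\<lambda>s::complex. of_real a4 * s^4 + of_real a3 * s^3 + of_real a2 * s^2 + of_real a1 * s + of_real a0)"
  have Deq: "sdea_den Kf Bf M B Pm Imc Pf Ifc \<alpha> = D"
    by (rule ext) (simp add: sdea_den_def D_def a4_def a3_def a2_def a1_def a0_def \<mu>_def \<nu>_def Let_def)
  have h12eq: "sdea_h12 Kf Bf M B Pm Imc Pf Ifc \<alpha> = (\<lambda>s. N s / D s)"
    by (rule ext) (simp add: sdea_h12_def Deq N_def n3_def n2_def n1_def n0_def \<mu>_def \<nu>_def Let_def)
  define c7 where "c7 = - n3 * a4"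
  define c5 where "c5 = n1*a4 + n3*a2 - n2*a3"
  define c3 where "c3 = n0*a3 + n2*a1 - n1*a2 - n3*a0"
  define c1 where "c1 = n1*a0 - n0*a1"
  have "c7 < 0" unfolding c7_def n3_def a4_def using assms by simp
  then obtain x where x: "c7*x^7 + c5*x^5 + c3*x^3 + c1*x < 0" using odd_poly_neg by blast
  define s where "s = \<i> * complex_of_real x"
  have s2: "s^2 = - of_real (x^2)" unfolding s_def by (simp add: power_mult_distrib)
  have s3: "s^3 = - \<i> * of_real (x^3)" unfolding s_def by (simp add: power_mult_distrib power3_eq_cube algebra_simps)
  have s4: "s^4 = of_real (x^4)" unfolding s_def
    by (simp add: power_mult_distrib)
  have Ns: "N s = Complex (n0 - n2*x^2) (n1*x - n3*x^3)"
    unfolding N_def s2 s3 by (simp add: complex_eq_iff s_def)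
  have Ds: "D s = Complex (a4*x^4 - a2*x^2 + a0) (a1*x - a3*x^3)"
    unfolding D_def s2 s3 s4 by (simp add: complex_eq_iff s_def)
  define num where "num = Im (N s) * Re (D s) - Re (N s) * Im (D s)"
  have "num = c7*x^7 + c5*x^5 + c3*x^3 + c1*x"
    unfolding num_def Ns Ds c7_def c5_def c3_def c1_def by simp algebra
  hence num0: "num \<noteq> 0" using x by simp
  have Dne: "D s \<noteq> 0"
  proof
    assume "D s = 0" thus False using num0 unfolding num_def by simp
  qed
  have Imh: "Im (N s / D s) \<noteq> 0"
  proof -
    have "(Re (D s))\<^sup>2 + (Im (D s))\<^sup>2 \<noteq> 0" using Dne by (simp add: complex_eq_iff)
    thus ?thesis using num0 unfolding Im_divide num_def by simp
  qed
  have regular: "regular_freq (sdea_h11 Kf Bf M B Pm Imc Pf Ifc \<alpha>) (sdea_h12 Kf Bf M B Pm Imc Pf Ifc \<alpha>)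
           sdea_h21 (sdea_h22 b22 k22) x"
  proof -
    have c11: "isCont (sdea_h11 Kf Bf M B Pm Imc Pf Ifc \<alpha>) s"
    proof -
      have "sdea_h11 Kf Bf M B Pm Imc Pf Ifc \<alpha> = (\<lambda>s. (of_real (Bf * M) * s^4 + of_real (Bf * (B + Pm) + Kf * M) * s^3
      + of_real (Bf * Imc + Kf * (B + Pm)) * s^2 + of_real (Kf * Imc) * s) / D s)"
        by (rule ext) (simp add: sdea_h11_def Deq)
      thus ?thesis using Dne unfolding D_def by (auto intro!: continuous_intros)
    qed
    have c12: "isCont (sdea_h12 Kf Bf M B Pm Imc Pf Ifc \<alpha>) s"
      unfolding h12eq using Dne unfolding D_def N_def by (auto intro!: continuous_intros)
    have c21: "isCont sdea_h21 s"
      by (simp add: sdea_h21_def[abs_def])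
    have c22: "isCont (sdea_h22 b22 k22) s"
    proof -
      have "sdea_h22 b22 k22 = (\<lambda>s. s / of_real k22)"
        by (rule ext) (simp add: sdea_h22_def b0)
      thus ?thesis using assms(6) by (auto intro!: continuous_intros)
    qed
    show ?thesis unfolding regular_freq_def s_def[symmetric] using c11 c12 c21 c22 by auto
  qed
  have cii: "llewellyn_cii (sdea_h11 Kf Bf M B Pm Imc Pf Ifc \<alpha>) (sdea_h12 Kf Bf M B Pm Imc Pf Ifc \<alpha>)
           sdea_h21 (sdea_h22 b22 k22)"
    using assms(16) unfolding absolutely_stable_def by simp
  have h22re: "Re (sdea_h22 b22 k22 s) = 0"
    by (simp add: sdea_h22_def b0 s_def)
  from cii regular have "2 * Re (sdea_h11 Kf Bf M B Pm Imc Pf Ifc \<alpha> s) * Re (sdea_h22 b22 k22 s)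
     - Re (sdea_h12 Kf Bf M B Pm Imc Pf Ifc \<alpha> s * sdea_h21 s) - cmod (sdea_h12 Kf Bf M B Pm Imc Pf Ifc \<alpha> s * sdea_h21 s) \<ge> 0"
    unfolding llewellyn_cii_def Let_def s_def by blast
  hence "Re (N s / D s) - cmod (N s / D s) \<ge> 0"
    by (simp add: h22re sdea_h21_def h12eq)
  moreover have "cmod (N s / D s) > Re (N s / D s)"
  proof -
    let ?z = "N s / D s"
    have "(Re ?z)^2 < (Re ?z)^2 + (Im ?z)^2" using Imh by simp
    hence "\<bar>Re ?z\<bar> < sqrt ((Re ?z)^2 + (Im ?z)^2)"
      using real_less_rsqrt by (metis abs_ge_zero real_sqrt_abs real_sqrt_less_iff)
    thus ?thesis unfolding cmod_def by linarith
  qed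
  ultimately show False by linarith
qed

end
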